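(* Consider the following heap data structure $H$ in the word-RAM model. A global time counter $t$ (initially $0$) is incremented after every \textsc{Push}; for an element $x_i$ of $H$, $a_i$ denotes the value of $t$ when $x_i$ was pushed. The elements of $H$ are partitioned into an array of buckets $B$; each bucket $B[j]$ contains one or two Fibonacci heaps, every element of $H$ lies in exactly one of these Fibonacci heaps, and with each Fibonacci heap $F$ a half-open interval $I_F\subset\mathbb{R}$ is stored, such that at all times $t$: (a) an element $x_i\in H$ is in $F$ if and only if $a_i\in I_F$; (b) the interval $I_F$ of every $F$ in $B[j]$ has length $2^j$; (c) all intervals of the Fibonacci heaps in $B[j-1]$ lie to the right of the intervals of the Fibonacci heaps in $B[j]$; (d) all the intervals together partition $[0,t)$. Then for any element $x_i\in H$, given $a_i$ and $t$, the bucket and the Fibonacci heap containing $x_i$ can be computed in constant time.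
   Context: Fibonacci heaps are the standard heap data structure of Fredman and Tarjan. Computation is in the word-RAM model. *)

theory Defs
  imports Complex_Main
begin

text \<open>Registers hold natural numbers below 2^w (w = word size). A program is a
fixed finite list of instructions without loops, so running it costs a number of
word operations independent of the input: this models "constant time".\<close>

definition msb_nat :: "nat \<Rightarrow> nat" where
  "msb_nat n = (LEAST k. n < 2 ^ Suc k)"   \<comment> \<open>floor(log2 n), and 0 for n = 0\<close>

datatype instr =
    Const nat nat
  | Add nat nat nat
  | Sub nat nat nat          \<comment> \<open>truncated subtraction\<close>
  | Mul nat nat nat
  | Div nat nat nat
  | Mod nat nat nat
  | BAnd nat nat nat
  | BOr nat nat nat
  | BXor nat nat nat
  | Shl nat nat nat
  | Shr nat nat nat
  | Msb nat nat
  | Lt nat nat nat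

fun step :: "nat \<Rightarrow> instr \<Rightarrow> (nat \<Rightarrow> nat) \<Rightarrow> (nat \<Rightarrow> nat)" where
  "step w (Const d c) s = s(d := c mod 2 ^ w)"
| "step w (Add d x y) s = s(d := (s x + s y) mod 2 ^ w)"
| "step w (Sub d x y) s = s(d := s x - s y)"
| "step w (Mul d x y) s = s(d := (s x * s y) mod 2 ^ w)"
| "step w (Div d x y) s = s(d := s x div s y)"
| "step w (Mod d x y) s = s(d := s x mod s y)"
| "step w (BAnd d x y) s = s(d := and (s x) (s y))"
| "step w (BOr d x y) s = s(d := or (s x) (s y))"
| "step w (BXor d x y) s = s(d := xor (s x) (s y))"
| "step w (Shl d x y) s = s(d := (s x * 2 ^ s y) mod 2 ^ w)"
| "step w (Shr d x y) s = s(d := s x div 2 ^ s y)"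
| "step w (Msb d x) s = s(d := msb_nat (s x))"
| "step w (Lt d x y) s = s(d := (if s x < s y then 1 else 0))"

definition run :: "nat \<Rightarrow> instr list \<Rightarrow> (nat \<Rightarrow> nat) \<Rightarrow> (nat \<Rightarrow> nat)" where
  "run w prog s = fold (step w) prog s"

text \<open>B ! j is bucket B[j]; it is a list of the left endpoints l of its Fibonacci
heaps, the heap with left endpoint l having interval I_F = [l, l + 2^j)
(invariant (b)).  By invariant (a), the heap containing x_i is the one whose
interval contains a_i, so a heap is identified by (bucket index, left endpoint).\<close>

definition heap_interval :: "nat \<Rightarrow> real \<Rightarrow> real set" where
  "heap_interval j l = {l ..< l + 2 ^ j}"

definition valid_buckets :: "nat \<Rightarrow> real list list \<Rightarrow> bool" where
  "valid_buckets t B \<longleftrightarrow>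
     \<comment> \<open>each bucket contains one or two Fibonacci heaps\<close>
     (\<forall>j < length B. length (B ! j) = 1 \<or> length (B ! j) = 2)
     \<comment> \<open>(c) intervals of B[j-1] lie to the right of those of B[j]\<close>
   \<and> (\<forall>j. 0 < j \<and> j < length B \<longrightarrow>
        (\<forall>l \<in> set (B ! (j - 1)). \<forall>l' \<in> set (B ! j). l' + 2 ^ j \<le> l))
     \<comment> \<open>(d) the intervals of all heaps are pairwise disjoint ...\<close>
   \<and> (\<forall>j p j' p'. j < length B \<and> p < length (B ! j) \<and> j' < length B \<and> p' < length (B ! j')
        \<and> (j, p) \<noteq> (j', p') \<longrightarrow>
        heap_interval j (B ! j ! p) \<inter> heap_interval j' (B ! j' ! p') = {})
     \<comment> \<open>... and together cover [0, t)\<close>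
   \<and> (\<Union>{heap_interval j l | j l. j < length B \<and> l \<in> set (B ! j)} = {0 ..< real t})"

end

theory Submission
  imports Defs "HOL-Analysis.Lebesgue_Measure"
begin

definition Rf :: "nat \<Rightarrow> nat \<Rightarrow> nat" where
  "Rf t j = (2^j - 1) + ((t mod 2^j + 1) mod 2^j)"

lemma run_append: "run w (p1 @ p2) s = run w p2 (run w p1 s)"
  by (simp add: run_def)

lemma B1: assumes "s 0 = a" "s 1 = t" "1 \<le> w" "2 ^ msb_nat (t - a) < (2::nat) ^ w"
  shows "run w [Const 2 1, Sub 3 1 0, Msb 4 3, Shl 5 2 4] s
     = s(2 := 1, 3 := t - a, 4 := msb_nat (t - a), 5 := 2 ^ msb_nat (t - a))"
proof -
  have "(1::nat) < 2 ^ w" using assms(3) by (metis one_less_numeral_iff one_less_power semiring_norm(76) order.strict_trans2 less_one not_less) 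
  then show ?thesis using assms by (simp add: run_def)
qed

lemma B2: assumes "s 1 = t" "s 5 = 2 ^ j" "s 2 = 1" "2 ^ j < (2::nat) ^ w" "Rf t j < 2 ^ w"
  shows "run w [Mod 6 1 5, Add 6 6 2, Mod 6 6 5, Sub 8 5 2, Add 6 8 6] s
     = s(8 := 2 ^ j - 1, 6 := Rf t j)"
proof -
  have "t mod 2 ^ j + 1 \<le> 2 ^ j"
    by (metis Suc_eq_plus1 Suc_leI mod_less_divisor zero_less_numeral zero_less_power)
  then have "t mod 2 ^ j + 1 < 2 ^ w" using assms(4) by linarith
  then show ?thesis using assms by (simp add: run_def Rf_def add.commute)
qed


lemma msb_bounds: assumes "1 \<le> n" shows "2 ^ msb_nat n \<le> n \<and> n < 2 ^ Suc (msb_nat n)"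
proof -
  have e: "n < 2 ^ n" by (rule less_exp)
  then have "n < 2 ^ Suc n" by (simp only: power_Suc)
  then have ex: "\<exists>k. n < 2 ^ Suc k" by blast
  have up: "n < 2 ^ Suc (msb_nat n)" unfolding msb_nat_def by (rule LeastI_ex[OF ex])
  have lo: "2 ^ msb_nat n \<le> n"
  proof (cases "msb_nat n")
    case 0 then show ?thesis using assms by simp
  next
    case (Suc k)
    then have "k < msb_nat n" by simp
    then have "\<not> n < 2 ^ Suc k" unfolding msb_nat_def by (rule not_less_Least)
    then show ?thesis using Suc by simp
  qed
  show ?thesis using up lo by simp
qed

definition R :: "(nat \<Rightarrow> nat) \<Rightarrow> nat \<Rightarrow> nat" where
  "R c j = (\<Sum>i<j. c i * 2 ^ i)"

lemma R_Suc: "R c (Suc j) = R c j + c j * 2 ^ j" by (simp add: R_def)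

lemma R_bounds: assumes "\<forall>i<k. c i = 1 \<or> c i = 2" "j \<le> k"
  shows "2 ^ j \<le> R c j + 1 \<and> R c j + 2 \<le> 2 ^ Suc j"
  using assms(2)
proof (induction j)
  case 0 then show ?case by (simp add: R_def)
next
  case (Suc j)
  then have "c j = 1 \<or> c j = 2" using assms(1) by simp
  then show ?case using Suc by (auto simp: R_Suc)
qed

lemma R_mono: "j \<le> k \<Longrightarrow> R c j \<le> R c k"
  unfolding R_def by (rule sum_mono2) auto

lemma R_split: "j \<le> k \<Longrightarrow> \<exists>X. R c k = R c j + 2 ^ j * X"
proof (induction k)
  case 0 then show ?case by simp
next
  case (Suc k)
  show ?case
  proof (cases "j = Suc k")
    case True then show ?thesis by (intro exI[of _ 0]) simp
  next
    case False
    then have "j \<le> k" using Suc by simp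
    then obtain X where X: "R c k = R c j + 2 ^ j * X" using Suc by blast
    have "(2::nat) ^ k = 2 ^ j * 2 ^ (k - j)" using \<open>j \<le> k\<close> by (simp add: power_add[symmetric])
    then have "R c (Suc k) = R c j + 2 ^ j * (X + c k * 2 ^ (k - j))"
      using X by (simp add: R_Suc algebra_simps)
    then show ?thesis by blast
  qed
qed

lemma Rf_R: assumes "\<forall>i<k. c i = 1 \<or> c i = 2" "j \<le> k" "t = R c k"
  shows "Rf t j = R c j"
proof -
  obtain X where X: "t = R c j + 2 ^ j * X" using R_split[OF assms(2)] assms(3) by blast
  have b: "2 ^ j \<le> R c j + 1" "R c j + 2 \<le> 2 ^ Suc j" using R_bounds[OF assms(1,2)] by auto
  define r where "r = R c j + 1 - 2 ^ j"
  have r: "R c j + 1 = 2 ^ j + r" "r < 2 ^ j" using b by (auto simp: r_def)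
  have "(t mod 2 ^ j + 1) mod 2 ^ j = (t + 1) mod 2 ^ j" by (simp add: mod_Suc_eq)
  also have "t + 1 = r + 2 ^ j * (1 + X)" using X r(1) by (simp add: algebra_simps)
  also have "(r + 2 ^ j * (1 + X)) mod 2 ^ j = r" using r(2) by (metis mod_mult_self2 mod_less)
  finally show ?thesis unfolding Rf_def using r(1) by simp
qed

definition JJ :: "nat \<Rightarrow> nat \<Rightarrow> nat" where
  "JJ t a = msb_nat (t - a) + (if Rf t (msb_nat (t - a)) < t - a then 1 else 0) - 1"

definition LEFT :: "nat \<Rightarrow> nat \<Rightarrow> nat" where
  "LEFT t a = (t - Rf t (JJ t a)) - ((t - Rf t (JJ t a) - a - 1) div 2 ^ JJ t a + 1) * 2 ^ JJ t a"

lemma arith_main: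
  assumes c: "\<forall>i<k. c i = 1 \<or> c i = 2" and t: "t = R c k" and j0: "j0 < k" and g: "g < c j0"
    and l0: "l0 + R c j0 + (g + 1) * 2 ^ j0 = t" and a: "l0 \<le> a" "a < l0 + 2 ^ j0"
  shows "JJ t a = j0 \<and> LEFT t a = l0 \<and> msb_nat (t - a) \<le> k \<and> msb_nat (t - a) \<le> j0 + 1
    \<and> (t - Rf t (JJ t a) - a - 1) div 2 ^ JJ t a = g"
proof -
  define u where "u = t - a"
  have cj: "c j0 = 1 \<or> c j0 = 2" using c j0 by simp
  have RS: "R c (Suc j0) = R c j0 + c j0 * 2 ^ j0" by (rule R_Suc)
  have u1: "R c j0 + g * 2 ^ j0 < u" using l0 a unfolding u_def by (simp add: algebra_simps)
  have u2: "u \<le> R c j0 + (g + 1) * 2 ^ j0" using l0 a unfolding u_def by (simp add: algebra_simps)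
  have gc: "(g + 1) * 2 ^ j0 \<le> c j0 * 2 ^ j0" using g by (intro mult_right_mono) auto
  have u3: "u \<le> R c (Suc j0)" using u2 gc RS by linarith
  have b0: "2 ^ j0 \<le> R c j0 + 1" "R c j0 + 2 \<le> 2 ^ Suc j0" using R_bounds[OF c, of j0] j0 by auto
  have b1: "R c (Suc j0) + 2 \<le> 2 ^ Suc (Suc j0)" using R_bounds[OF c, of "Suc j0"] j0 by auto
  have u0: "1 \<le> u" using u1 by simp
  define m where "m = msb_nat u"
  have mb: "2 ^ m \<le> u" "u < 2 ^ Suc m" using msb_bounds[OF u0] unfolding m_def by auto
  have "(2::nat) ^ m < 2 ^ Suc (Suc j0)" using mb u3 b1 by linarith
  then have "m < Suc (Suc j0)" using power_less_imp_less_exp by (metis one_less_numeral_iff semiring_norm(76))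
  then have m1: "m \<le> Suc j0" by simp
  have "(2::nat) ^ j0 < 2 ^ Suc m" using mb u1 b0 by linarith
  then have "j0 < Suc m" using power_less_imp_less_exp by (metis one_less_numeral_iff semiring_norm(76))
  then have m2: "j0 \<le> m" by simp
  have mk: "m \<le> k" using m1 j0 by simp
  have RfR: "Rf t m = R c m" using Rf_R[OF c mk t] .
  have mu: "msb_nat (t - a) = m" unfolding m_def u_def ..
  have JJ: "JJ t a = j0"
  proof (cases "m = j0")
    case True
    then have "Rf t m < u" using RfR u1 by simp
    then show ?thesis unfolding JJ_def u_def[symmetric] m_def[symmetric] using True by simp
  next
    case False
    then have ms: "m = Suc j0" using m1 m2 by simp
    then have "\<not> Rf t m < u" using RfR u3 by simp
    then show ?thesis unfolding JJ_def u_def[symmetric] m_def[symmetric] using ms by simp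
  qed
  have Rj: "Rf t j0 = R c j0" using Rf_R[OF c _ t] j0 by simp
  have q: "(t - R c j0 - a - 1) div 2 ^ j0 = g"
  proof -
    have e: "t - R c j0 - a - 1 = u - R c j0 - 1" unfolding u_def by simp
    have "2 ^ j0 * g \<le> u - R c j0 - 1" "u - R c j0 - 1 < 2 ^ j0 * Suc g"
      using u1 u2 by (simp_all add: algebra_simps)
    then show ?thesis unfolding e by (rule div_nat_eqI)
  qed
  have L: "LEFT t a = l0" unfolding LEFT_def JJ Rj q using l0 by linarith
  show ?thesis using JJ L mk m1 q Rj unfolding mu by simp
qed


lemma B3: assumes "s 6 = r" "s 3 = u" "s 4 = m" "s 2 = 1" "m + 1 < (2::nat) ^ w"
   "2 ^ (m + (if r < u then 1 else 0) - 1) < (2::nat) ^ w"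
  shows "run w [Lt 7 6 3, Add 7 4 7, Sub 7 7 2, Shl 5 2 7] s
     = s(7 := m + (if r < u then 1 else 0) - 1, 5 := 2 ^ (m + (if r < u then 1 else 0) - 1))"
proof -
  have "m + (if r < u then 1 else 0) < 2 ^ w" using assms(5) by auto
  then show ?thesis using assms by (simp add: run_def)
qed

lemma B4: assumes "s 0 = a" "s 1 = t" "s 6 = r" "s 2 = 1" "s 7 = j" "s 5 = 2 ^ j" "s 10 = 0"
  "j < 2 ^ w" "((t - r - a - 1) div 2 ^ j + 1) < (2::nat) ^ w"
  "((t - r - a - 1) div 2 ^ j + 1) * 2 ^ j < (2::nat) ^ w"
  shows "run w [Sub 8 1 6, Sub 9 8 0, Sub 9 9 2, Shr 9 9 7, Add 9 9 2, Mul 9 9 5, Sub 1 8 9, Add 0 7 10] s 0 = j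
   \<and> run w [Sub 8 1 6, Sub 9 8 0, Sub 9 9 2, Shr 9 9 7, Add 9 9 2, Mul 9 9 5, Sub 1 8 9, Add 0 7 10] s 1
       = (t - r) - ((t - r - a - 1) div 2 ^ j + 1) * 2 ^ j"
  using assms by (simp add: run_def)

definition B2 :: "instr list" where "B2 = [Mod 6 1 5, Add 6 6 2, Mod 6 6 5, Sub 8 5 2, Add 6 8 6]"

definition prog :: "instr list" where
 "prog = [Const 2 1, Sub 3 1 0, Msb 4 3, Shl 5 2 4] @ B2 @ [Lt 7 6 3, Add 7 4 7, Sub 7 7 2, Shl 5 2 7]
   @ B2 @ [Sub 8 1 6, Sub 9 8 0, Sub 9 9 2, Shr 9 9 7, Add 9 9 2, Mul 9 9 5, Sub 1 8 9, Add 0 7 10]"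

lemma run_prog:
  fixes s :: "nat \<Rightarrow> nat" and t a w :: nat
  defines "m \<equiv> msb_nat (t - a)"
  defines "q \<equiv> (t - Rf t (JJ t a) - a - 1) div 2 ^ JJ t a"
  assumes "s 0 = a" "s 1 = t" "s 10 = 0" "1 \<le> w" "2 ^ m < (2::nat) ^ w" "Rf t m < 2 ^ w"
    "m + 1 < 2 ^ w" "2 ^ JJ t a < (2::nat) ^ w" "Rf t (JJ t a) < 2 ^ w" "JJ t a < 2 ^ w"
    "q + 1 < 2 ^ w" "(q + 1) * 2 ^ JJ t a < 2 ^ w"
  shows "run w prog s 0 = JJ t a \<and> run w prog s 1 = LEFT t a"
proof -
  define s1 where "s1 = s(2 := 1, 3 := t - a, 4 := m, 5 := 2 ^ m)"
  have r1: "run w [Const 2 1, Sub 3 1 0, Msb 4 3, Shl 5 2 4] s = s1"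
    unfolding s1_def m_def by (rule B1) (use assms in \<open>simp_all add: m_def\<close>)
  define s2 where "s2 = s1(8 := 2 ^ m - 1, 6 := Rf t m)"
  have r2: "run w B2 s1 = s2" unfolding s2_def B2_def
    by (rule B2) (use assms in \<open>simp_all add: s1_def\<close>)
  have jj: "JJ t a = m + (if Rf t m < t - a then 1 else 0) - 1" unfolding JJ_def m_def ..
  define s3 where "s3 = s2(7 := JJ t a, 5 := 2 ^ JJ t a)"
  have r3: "run w [Lt 7 6 3, Add 7 4 7, Sub 7 7 2, Shl 5 2 7] s2 = s3" unfolding s3_def jj
    by (rule B3) (use assms jj in \<open>simp_all add: s1_def s2_def\<close>)
  define s4 where "s4 = s3(8 := 2 ^ JJ t a - 1, 6 := Rf t (JJ t a))"
  have r4: "run w B2 s3 = s4" unfolding s4_def B2_def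
    by (rule B2) (use assms in \<open>simp_all add: s1_def s2_def s3_def\<close>)
  have r5: "run w [Sub 8 1 6, Sub 9 8 0, Sub 9 9 2, Shr 9 9 7, Add 9 9 2, Mul 9 9 5, Sub 1 8 9, Add 0 7 10] s4 0 = JJ t a
   \<and> run w [Sub 8 1 6, Sub 9 8 0, Sub 9 9 2, Shr 9 9 7, Add 9 9 2, Mul 9 9 5, Sub 1 8 9, Add 0 7 10] s4 1
       = (t - Rf t (JJ t a)) - ((t - Rf t (JJ t a) - a - 1) div 2 ^ JJ t a + 1) * 2 ^ JJ t a"
    by (rule B4) (use assms in \<open>simp_all add: s1_def s2_def s3_def s4_def\<close>)
  show ?thesis using r1 r2 r3 r4 r5 unfolding prog_def run_append LEFT_def by simp
qed


lemma sum_len: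
  fixes I :: "'i \<Rightarrow> real set" and len lo :: "'i \<Rightarrow> real"
  assumes "finite S" "disjoint_family_on I S" "\<And>i. i \<in> S \<Longrightarrow> I i = {lo i ..< lo i + len i}"
    "\<And>i. i \<in> S \<Longrightarrow> 0 \<le> len i" "(\<Union>i\<in>S. I i) = {x..<y}" "x \<le> y"
  shows "y - x = (\<Sum>i\<in>S. len i)"
proof -
  have "y - x = measure lborel {x..<y}" using assms(6) by simp
  also have "\<dots> = measure lborel (\<Union>i\<in>S. I i)" using assms(5) by simp
  also have "\<dots> = (\<Sum>i\<in>S. measure lborel (I i))"
    by (rule measure_finite_Union) (use assms in auto)
  also have "\<dots> = (\<Sum>i\<in>S. len i)" by (rule sum.cong) (use assms in auto)
  finally show ?thesis .
qed

lemma bucket_structure: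
  assumes v: "valid_buckets t B" and at: "real a < real t"
  defines "k \<equiv> length B" and "c \<equiv> \<lambda>j. length (B ! j)"
  shows "(\<forall>i<k. c i = 1 \<or> c i = 2) \<and> t = R c k \<and>
     (\<exists>j0 p0 g L. j0 < k \<and> p0 < c j0 \<and> g < c j0 \<and> real L = B ! j0 ! p0 \<and>
        L + R c j0 + (g + 1) * 2 ^ j0 = t \<and> L \<le> a \<and> a < L + 2 ^ j0)"
proof -
  have v1: "\<forall>j<k. c j = 1 \<or> c j = 2" and
    v2: "\<And>j l l'. 0 < j \<Longrightarrow> j < k \<Longrightarrow> l \<in> set (B ! (j - 1)) \<Longrightarrow> l' \<in> set (B ! j) \<Longrightarrow> l' + 2 ^ j \<le> l" and
    v3: "\<And>j p j' p'. j < k \<Longrightarrow> p < c j \<Longrightarrow> j' < k \<Longrightarrow> p' < c j' \<Longrightarrow> (j, p) \<noteq> (j', p') \<Longrightarrow>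
        heap_interval j (B ! j ! p) \<inter> heap_interval j' (B ! j' ! p') = {}" and
    v4: "\<Union>{heap_interval j l | j l. j < k \<and> l \<in> set (B ! j)} = {0 ..< real t}"
    using v unfolding valid_buckets_def k_def c_def by meson+
  have pos: "\<And>j. (0::real) < 2 ^ j" by simp
  define HI where "HI = Sigma {..<k} (\<lambda>j. {..<c j})"
  define Iv where "Iv = (\<lambda>(j, p). heap_interval j (B ! j ! p))"
  have finHI: "finite HI" unfolding HI_def by auto
  have hd: "disjoint_family_on Iv HI"
  proof (unfold disjoint_family_on_def, intro ballI impI)
    fix x y assume xy: "x \<in> HI" "y \<in> HI" "x \<noteq> y"
    obtain j p j' p' where e: "x = (j, p)" "y = (j', p')" by (cases x, cases y) auto
    show "Iv x \<inter> Iv y = {}" using xy v3[of j p j' p'] unfolding e HI_def Iv_def by auto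
  qed
  have img: "{heap_interval j l | j l. j < k \<and> l \<in> set (B ! j)} = Iv ` HI"
  proof
    show "{heap_interval j l | j l. j < k \<and> l \<in> set (B ! j)} \<subseteq> Iv ` HI"
    proof
      fix X assume "X \<in> {heap_interval j l | j l. j < k \<and> l \<in> set (B ! j)}"
      then obtain j l where jl: "X = heap_interval j l" "j < k" "l \<in> set (B ! j)" by blast
      then obtain p where p: "p < c j" "l = B ! j ! p" unfolding c_def by (metis in_set_conv_nth)
      have "(j, p) \<in> HI" unfolding HI_def using jl p by simp
      moreover have "X = Iv (j, p)" unfolding Iv_def using jl p by simp
      ultimately show "X \<in> Iv ` HI" by blast
    qed
  next
    show "Iv ` HI \<subseteq> {heap_interval j l | j l. j < k \<and> l \<in> set (B ! j)}"
    proof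
      fix X assume "X \<in> Iv ` HI"
      then obtain j p where jp: "(j, p) \<in> HI" "X = Iv (j, p)" by auto
      then have "j < k" "B ! j ! p \<in> set (B ! j)" unfolding HI_def c_def by auto
      then show "X \<in> {heap_interval j l | j l. j < k \<and> l \<in> set (B ! j)}" using jp(2) unfolding Iv_def by auto
    qed
  qed
  have hu: "(\<Union>x\<in>HI. Iv x) = {0 ..< real t}" using v4 img by simp
  have Ivf: "\<And>x. Iv x = {B ! fst x ! snd x ..< B ! fst x ! snd x + 2 ^ fst x}"
    unfolding Iv_def heap_interval_def by auto
  have sumHI: "(\<Sum>x\<in>Sigma A (\<lambda>j. {..<c j}). (2::real) ^ fst x) = (\<Sum>j\<in>A. real (c j) * 2 ^ j)"
    if "finite A" for A
  proof -
    have "(\<Sum>j\<in>A. \<Sum>p\<in>{..<c j}. (2::real) ^ j) = (\<Sum>(j, p)\<in>Sigma A (\<lambda>j. {..<c j}). (2::real) ^ j)"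
      by (rule sum.Sigma) (use that in auto)
    then show ?thesis by (simp add: split_def)
  qed
  have A1: "real t - 0 = (\<Sum>x\<in>HI. (2::real) ^ fst x)"
    by (rule sum_len[OF finHI hd Ivf _ hu]) auto
  also have "\<dots> = real (R c k)" unfolding HI_def R_def by (simp add: sumHI)
  finally have tR: "t = R c k" by simp
  have ordd: "\<And>j l l0. j + Suc d < k \<Longrightarrow> l \<in> set (B ! j) \<Longrightarrow> l0 \<in> set (B ! (j + Suc d)) \<Longrightarrow>
      l0 + 2 ^ (j + Suc d) \<le> l" for d
  proof (induction d)
    case 0
    then show ?case using v2[of "j + 1" l l0] by simp
  next
    case (Suc d)
    have "j + Suc d < k" using Suc.prems(1) by simp
    then have "c (j + Suc d) \<noteq> 0" using v1 by fastforce
    then obtain l1 where l1: "l1 \<in> set (B ! (j + Suc d))" unfolding c_def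
      by (metis length_0_conv list.set_intros(1) neq_Nil_conv)
    have "l1 + 2 ^ (j + Suc d) \<le> l" using Suc.IH[OF _ Suc.prems(2) l1] Suc.prems(1) by simp
    moreover have "l0 + 2 ^ (j + Suc (Suc d)) \<le> l1"
      using v2[of "j + Suc (Suc d)" l1 l0] Suc.prems l1 by simp
    moreover have "(0::real) \<le> 2 ^ (j + Suc d)" by simp
    ultimately show ?case by linarith
  qed
  have ordlt: "l0 + 2 ^ j0 \<le> l" if "j < j0" "j0 < k" "l \<in> set (B ! j)" "l0 \<in> set (B ! j0)" for j j0 l l0
    using ordd[of j "j0 - j - 1" l l0] that by simp
  have sb: "B ! j ! p + 2 ^ j \<le> B ! j ! p'"
    if "j < k" "p < c j" "p' < c j" "p \<noteq> p'" "B ! j ! p \<le> B ! j ! p'" for j p p'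
  proof (rule ccontr)
    assume "\<not> ?thesis"
    then have "B ! j ! p' \<in> heap_interval j (B ! j ! p) \<inter> heap_interval j (B ! j ! p')"
      using that(5) unfolding heap_interval_def by auto
    then show False using v3[of j p j p'] that by auto
  qed
  have "real a \<in> (\<Union>x\<in>HI. Iv x)" using hu at by simp
  then obtain x0 where x0: "x0 \<in> HI" "real a \<in> Iv x0" by blast
  obtain j0 p0 where jp: "x0 = (j0, p0)" by (cases x0)
  have j0: "j0 < k" "p0 < c j0" using x0 jp unfolding HI_def by auto
  define l0 where "l0 = B ! j0 ! p0"
  have l0set: "l0 \<in> set (B ! j0)" unfolding l0_def using j0 unfolding c_def by simp
  have al: "l0 \<le> real a" "real a < l0 + 2 ^ j0" using x0 jp Ivf[of x0] unfolding l0_def by auto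
  have "Iv x0 \<subseteq> {0..<real t}" using hu x0 by auto
  then have "{l0 ..< l0 + 2 ^ j0} \<subseteq> {0..<real t}" using Ivf[of x0] jp l0_def by simp
  moreover have "\<not> (2::real) ^ j0 \<le> 0" using zero_less_power[of "2::real" j0] by linarith
  ultimately have lt: "0 \<le> l0" "l0 + 2 ^ j0 \<le> real t" by (auto simp: atLeastLessThan_subset_iff )
  define G where "G = {p. p < c j0 \<and> l0 < B ! j0 ! p}"
  define Rt where "Rt = Sigma {..<j0} (\<lambda>j. {..<c j}) \<union> ({j0} \<times> G)"
  have RtHI: "Rt \<subseteq> HI" unfolding Rt_def HI_def G_def using j0 by auto
  have finRt: "finite Rt" using finite_subset[OF RtHI finHI] .
  have hdR: "disjoint_family_on Iv Rt" using disjoint_family_on_mono[OF RtHI hd] .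
  have huR: "(\<Union>x\<in>Rt. Iv x) = {l0 + 2 ^ j0 ..< real t}"
  proof
    show "(\<Union>x\<in>Rt. Iv x) \<subseteq> {l0 + 2 ^ j0 ..< real t}"
    proof
      fix y assume "y \<in> (\<Union>x\<in>Rt. Iv x)"
      then obtain j p where jp': "(j, p) \<in> Rt" "y \<in> Iv (j, p)" by auto
      have "y \<in> (\<Union>x\<in>HI. Iv x)" using jp' RtHI by blast
      then have yt: "y < real t" using hu by simp
      have pin: "B ! j ! p \<in> set (B ! j)" "j < k" "p < c j" using jp' RtHI unfolding HI_def c_def by auto
      have "l0 + 2 ^ j0 \<le> B ! j ! p"
      proof (cases "j < j0")
        case True then show ?thesis using ordlt[OF True j0(1) pin(1) l0set] by simp
      next
        case False
        then have "j = j0" "p \<in> G" using jp' unfolding Rt_def by auto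
        then show ?thesis using sb[of j0 p0 p] j0 unfolding G_def l0_def by auto
      qed
      then show "y \<in> {l0 + 2 ^ j0 ..< real t}" using jp'(2) yt Ivf[of "(j,p)"] by auto
    qed
  next
    show "{l0 + 2 ^ j0 ..< real t} \<subseteq> (\<Union>x\<in>Rt. Iv x)"
    proof
      fix y assume y: "y \<in> {l0 + 2 ^ j0 ..< real t}"
      have y12: "l0 + 2 ^ j0 \<le> y" "y < real t" using y by auto
      have "0 \<le> y" using y12(1) lt(1) pos[of j0] by linarith
      then have "y \<in> {0..<real t}" using y12 by simp
      then have "y \<in> (\<Union>x\<in>HI. Iv x)" using hu by simp
      then obtain j p where jp': "(j, p) \<in> HI" "y \<in> Iv (j, p)" by auto
      have pin: "B ! j ! p \<in> set (B ! j)" "j < k" "p < c j" using jp' unfolding HI_def c_def by auto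
      have yI: "B ! j ! p \<le> y" "y < B ! j ! p + 2 ^ j" using jp'(2) Ivf[of "(j,p)"] by auto
      have "(j, p) \<in> Rt"
      proof (cases "j < j0")
        case True then show ?thesis unfolding Rt_def using pin by auto
      next
        case False
        show ?thesis
        proof (cases "j = j0")
          case False
          then have "j0 < j" using \<open>\<not> j < j0\<close> by simp
          then have "B ! j ! p + 2 ^ j \<le> l0" using ordlt[OF _ pin(2) l0set pin(1)] by simp
          then have False using yI y12 pos[of j0] by linarith
          then show ?thesis ..
        next
          case True
          have "p \<noteq> p0" using yI y True unfolding l0_def by auto
          moreover have "\<not> B ! j0 ! p \<le> l0"
          proof
            assume "B ! j0 ! p \<le> l0"
            then have "B ! j0 ! p + 2 ^ j0 \<le> l0" using sb[of j0 p p0] j0 pin True \<open>p \<noteq> p0\<close>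
              unfolding l0_def by auto
            then show False using yI y12 True pos[of j0] by simp
          qed
          ultimately show ?thesis unfolding Rt_def G_def using True pin by auto
        qed
      qed
      then show "y \<in> (\<Union>x\<in>Rt. Iv x)" using jp' by auto
    qed
  qed
  have SR: "real t - (l0 + 2 ^ j0) = (\<Sum>x\<in>Rt. (2::real) ^ fst x)"
    by (rule sum_len[OF finRt hdR Ivf _ huR]) (use lt in auto)
  have finG: "finite G" unfolding G_def by auto
  have "(\<Sum>x\<in>Rt. (2::real) ^ fst x) = (\<Sum>x\<in>Sigma {..<j0} (\<lambda>j. {..<c j}). (2::real) ^ fst x)
      + (\<Sum>x\<in>{j0} \<times> G. (2::real) ^ fst x)"
    unfolding Rt_def by (rule sum.union_disjoint) (use finG in auto)
  also have "\<dots> = real (R c j0) + real (card G) * 2 ^ j0"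
  proof -
    have "(\<Sum>x\<in>{j0} \<times> G. (2::real) ^ fst x) = (\<Sum>x\<in>{j0} \<times> G. 2 ^ j0)" by (rule sum.cong) auto
    also have "\<dots> = real (card G) * 2 ^ j0" by (simp add: card_cartesian_product_singleton)
    finally show ?thesis unfolding R_def by (simp add: sumHI)
  qed
  finally have SR2: "real t - (l0 + 2 ^ j0) = real (R c j0) + real (card G) * 2 ^ j0" using SR by simp
  have "G \<subseteq> {..<c j0} - {p0}" unfolding G_def l0_def by auto
  then have "card G \<le> card ({..<c j0} - {p0})" by (intro card_mono) auto
  also have "\<dots> = c j0 - 1" using j0 by simp
  finally have gc: "card G < c j0" using j0 by linarith
  define g where "g = card G"
  have tge: "R c j0 + (g + 1) * 2 ^ j0 \<le> t"
  proof -
    have "real (R c j0 + (g + 1) * 2 ^ j0) \<le> real t" using SR2 lt unfolding g_def by (simp add: algebra_simps)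
    then show ?thesis by linarith
  qed
  define L where "L = t - (R c j0 + (g + 1) * 2 ^ j0)"
  have LL: "L + R c j0 + (g + 1) * 2 ^ j0 = t" unfolding L_def using tge by simp
  have rL: "real L = l0"
  proof -
    have "real L = real t - (real (R c j0) + (real g + 1) * 2 ^ j0)" unfolding L_def using tge
      by (simp add: of_nat_diff algebra_simps)
    then show ?thesis using SR2 unfolding g_def by (simp add: algebra_simps)
  qed
  have "real L \<le> real a" "real a < real L + 2 ^ j0" using al rL by auto
  then have "L \<le> a" "real a < real (L + 2 ^ j0)" by auto
  then have "L \<le> a" "a < L + 2 ^ j0" by (simp_all only: of_nat_less_iff)
  then show ?thesis using v1 tR j0 gc LL rL unfolding l0_def g_def by blast
qed
theorem lemma4:
  shows "\<exists>prog :: instr list. \<forall>(w::nat) (t::nat) (B::real list list) (a::nat).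
           t < 2 ^ w \<longrightarrow> valid_buckets t B \<longrightarrow> a < t \<longrightarrow>
           (let s = run w prog (\<lambda>r. if r = 0 then a else if r = 1 then t else 0)
            in s 0 < length B \<and> real (s 1) \<in> set (B ! s 0)
               \<and> real a \<in> heap_interval (s 0) (real (s 1)))"
proof (intro exI[of _ prog] allI impI)
  fix w t :: nat and B :: "real list list" and a :: nat
  assume tw: "t < 2 ^ w" and v: "valid_buckets t B" and at: "a < t"
  define k where "k = length B"
  define c where "c = (\<lambda>j. length (B ! j))"
  have at': "real a < real t" using at by simp
  have st: "(\<forall>i<k. c i = 1 \<or> c i = 2) \<and> t = R c k \<and>
     (\<exists>j0 p0 g L. j0 < k \<and> p0 < c j0 \<and> g < c j0 \<and> real L = B ! j0 ! p0 \<and>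
        L + R c j0 + (g + 1) * 2 ^ j0 = t \<and> L \<le> a \<and> a < L + 2 ^ j0)"
    unfolding k_def c_def by (rule bucket_structure[OF v at'])
  then have c1: "\<forall>i<k. c i = 1 \<or> c i = 2" and tR: "t = R c k" by auto
  from st obtain j0 p0 g L where j0: "j0 < k" "p0 < c j0" "g < c j0" "real L = B ! j0 ! p0"
    and LL: "L + R c j0 + (g + 1) * 2 ^ j0 = t" "L \<le> a" "a < L + 2 ^ j0" by blast
  have am: "JJ t a = j0 \<and> LEFT t a = L \<and> msb_nat (t - a) \<le> k \<and> msb_nat (t - a) \<le> j0 + 1
    \<and> (t - Rf t (JJ t a) - a - 1) div 2 ^ JJ t a = g"
    by (rule arith_main[OF c1 tR j0(1) j0(3) LL])
  define s0 where "s0 = (\<lambda>r::nat. if r = 0 then a else if r = 1 then t else 0)"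
  define m where "m = msb_nat (t - a)"
  have u1: "1 \<le> t - a" using at by simp
  have "2 ^ m \<le> t - a" using msb_bounds[OF u1] unfolding m_def by simp
  then have pm: "2 ^ m \<le> t" by simp
  have w1: "1 \<le> w" using tw at by (cases w) auto
  have "(2::nat) ^ m < 2 ^ w" using pm tw by linarith
  then have mw: "m < w" by simp
  have "Rf t m = R c m" using Rf_R[OF c1 _ tR] am unfolding m_def by simp
  also have "\<dots> \<le> t" using R_mono[of m k c] am tR unfolding m_def by simp
  finally have b1: "Rf t m < 2 ^ w" using tw by simp
  have "w < 2 ^ w" by (rule less_exp)
  then have b2: "m + 1 < 2 ^ w" using mw by linarith
  have gj: "2 ^ j0 \<le> (g + 1) * (2::nat) ^ j0" by simp
  have gt: "(g + 1) * 2 ^ j0 \<le> t" using LL(1) by simp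
  have jjE: "JJ t a = j0" and qE: "(t - Rf t (JJ t a) - a - 1) div 2 ^ JJ t a = g" using am by auto
  have qE': "(t - Rf t j0 - a - 1) div 2 ^ j0 = g" using qE unfolding jjE .
  have "(2::nat) ^ j0 < 2 ^ w" using gj gt tw by linarith
  then have b3: "2 ^ JJ t a < (2::nat) ^ w" unfolding jjE .
  have "Rf t j0 = R c j0" using Rf_R[OF c1 _ tR] j0 by simp
  moreover have "R c j0 < 2 ^ w" using LL(1) tw by linarith
  ultimately have b4: "Rf t (JJ t a) < 2 ^ w" unfolding jjE by simp
  have "j0 < 2 ^ j0" by (rule less_exp)
  then have "j0 < 2 ^ w" using gj gt tw by linarith
  then have b5: "JJ t a < 2 ^ w" unfolding jjE .
  have "(g + 1) * 2 ^ j0 < (2::nat) ^ w" using gt tw by linarith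
  then have b7: "((t - Rf t (JJ t a) - a - 1) div 2 ^ JJ t a + 1) * 2 ^ JJ t a < 2 ^ w"
    unfolding jjE qE' .
  have "g + 1 \<le> (g + 1) * (2::nat) ^ j0" using mult_le_mono2[of 1 "2 ^ j0" "g + 1"] by simp
  then have "g + 1 < (2::nat) ^ w" using gt tw by linarith
  then have b6: "(t - Rf t (JJ t a) - a - 1) div 2 ^ JJ t a + 1 < 2 ^ w" unfolding jjE qE' .
  have r: "run w prog s0 0 = JJ t a \<and> run w prog s0 1 = LEFT t a"
    by (rule run_prog) (use w1 mw pm tw b1 b2 b3 b4 b5 b6 b7 in \<open>simp_all add: s0_def m_def[symmetric]\<close>)
  have e0: "run w prog s0 0 = j0" using r jjE by simp
  have e1: "run w prog s0 1 = L" using r am by simp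
  have h1: "j0 < length B" using j0 unfolding k_def by simp
  have h2: "real L \<in> set (B ! j0)" using j0 nth_mem[of p0 "B ! j0"] unfolding c_def by simp
  have "real (a) < real (L + 2 ^ j0)" using LL(3) by (simp only: of_nat_less_iff)
  then have h3: "real a \<in> heap_interval j0 (real L)" using LL(2) unfolding heap_interval_def by simp
  show "let s = run w prog (\<lambda>r. if r = 0 then a else if r = 1 then t else 0)
            in s 0 < length B \<and> real (s 1) \<in> set (B ! s 0)
               \<and> real a \<in> heap_interval (s 0) (real (s 1))"
    unfolding Let_def s0_def[symmetric] e0 e1 using h1 h2 h3 by blast
qed

end
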